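(* Every precompact subset $A$ of the Banach space $c_0$ has finite entropy; moreover $\mathbf E(A)=\mathbf E_0(A)=\sup_{x\in A}\|x\|$.
   Context: $c_0$ is the real Banach space of null sequences with the supremum norm. A brick in a Banach space $X$ is a set $K_{\mathcal B,\mathcal E}=\{x\in X:\ |e_n^*(x)|\le\varepsilon_n\ \forall n\}$, where $\mathcal B=(e_n)$ is a normalized Schauder basis with biorthogonal functionals $(e_n^* )$ and $\varepsilon_n\ge0$; its unconditional radius is $r^{\rm unc}(K_{\mathcal B,\mathcal E})=\sup_{\theta_n=\pm1}\|\sum_n\theta_n\varepsilon_ne_n\|$ (norm of a divergent series $=\infty$). The entropy $\mathbf E(A)$ is the infimum of $r^{\rm unc}$ over all bricks containing $A$; the unconditional entropy $\mathbf E_0(A)$ is the same infimum over bricks built on $1$-unconditional bases (i.e. $\|\sum_n\theta_ne_n^*(x)e_n\|\le\|x\|$ for all $x$ and all signs $\theta_n=\pm1$); an empty infimum is $\infty$. A set is precompact if for every $\varepsilon>0$ it contains a finite $\varepsilon$-net. *)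

theory Defs
  imports "HOL-Analysis.Analysis"
begin

definition c0 :: "(nat \<Rightarrow> real) set" where
  "c0 = {x. x \<longlonglongrightarrow> 0}"

definition c0norm :: "(nat \<Rightarrow> real) \<Rightarrow> real" where
  "c0norm x = (SUP k. \<bar>x k\<bar>)"

definition series_conv :: "(nat \<Rightarrow> real) \<Rightarrow> (nat \<Rightarrow> nat \<Rightarrow> real) \<Rightarrow> (nat \<Rightarrow> real) \<Rightarrow> bool" where
  "series_conv a e x \<longleftrightarrow>
     (\<lambda>N. c0norm (\<lambda>k. (\<Sum>n<N. a n * e n k) - x k)) \<longlonglongrightarrow> 0"

definition schauder_basis :: "(nat \<Rightarrow> nat \<Rightarrow> real) \<Rightarrow> bool" where
  "schauder_basis e \<longleftrightarrow>
     (\<forall>n. e n \<in> c0) \<and> (\<forall>n. c0norm (e n) = 1) \<and>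
     (\<forall>x\<in>c0. \<exists>!a. series_conv a e x)"

definition coef :: "(nat \<Rightarrow> nat \<Rightarrow> real) \<Rightarrow> nat \<Rightarrow> (nat \<Rightarrow> real) \<Rightarrow> real" where
  "coef e n x = (THE a. series_conv a e x) n"

definition signs :: "(nat \<Rightarrow> real) set" where
  "signs = {\<theta>. \<forall>n. \<theta> n = 1 \<or> \<theta> n = -1}"

definition unconditional_basis :: "(nat \<Rightarrow> nat \<Rightarrow> real) \<Rightarrow> bool" where
  "unconditional_basis e \<longleftrightarrow> schauder_basis e \<and>
     (\<forall>x\<in>c0. \<forall>\<theta>\<in>signs. \<exists>y\<in>c0.
        series_conv (\<lambda>n. \<theta> n * coef e n x) e y \<and> c0norm y \<le> c0norm x)"

definition brick :: "(nat \<Rightarrow> nat \<Rightarrow> real) \<Rightarrow> (nat \<Rightarrow> real) \<Rightarrow> (nat \<Rightarrow> real) set" where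
  "brick e \<epsilon> = {x \<in> c0. \<forall>n. \<bar>coef e n x\<bar> \<le> \<epsilon> n}"

definition series_norm :: "(nat \<Rightarrow> real) \<Rightarrow> (nat \<Rightarrow> nat \<Rightarrow> real) \<Rightarrow> ereal" where
  "series_norm a e =
     (if \<exists>y\<in>c0. series_conv a e y
      then ereal (c0norm (THE y. y \<in> c0 \<and> series_conv a e y))
      else \<infinity>)"

definition r_unc :: "(nat \<Rightarrow> nat \<Rightarrow> real) \<Rightarrow> (nat \<Rightarrow> real) \<Rightarrow> ereal" where
  "r_unc e \<epsilon> = (SUP \<theta>\<in>signs. series_norm (\<lambda>n. \<theta> n * \<epsilon> n) e)"

definition entropy :: "(nat \<Rightarrow> real) set \<Rightarrow> ereal" where
  "entropy A = (INF p \<in> {(e, \<epsilon>). schauder_basis e \<and> (\<forall>n. \<epsilon> n \<ge> 0) \<and> A \<subseteq> brick e \<epsilon>}.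
                  r_unc (fst p) (snd p))"

definition entropy0 :: "(nat \<Rightarrow> real) set \<Rightarrow> ereal" where
  "entropy0 A = (INF p \<in> {(e, \<epsilon>). unconditional_basis e \<and> (\<forall>n. \<epsilon> n \<ge> 0) \<and> A \<subseteq> brick e \<epsilon>}.
                  r_unc (fst p) (snd p))"

definition precompact_c0 :: "(nat \<Rightarrow> real) set \<Rightarrow> bool" where
  "precompact_c0 A \<longleftrightarrow> (\<forall>\<epsilon>>0. \<exists>F. finite F \<and> F \<subseteq> A \<and>
      (\<forall>x\<in>A. \<exists>y\<in>F. c0norm (\<lambda>k. x k - y k) < \<epsilon>))"

end

theory Submission
  imports Defs
begin

lemma c0_bdd: assumes "x \<in> c0" shows "bdd_above (range (\<lambda>k. \<bar>x k\<bar>))"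
proof -
  from assms have "x \<longlonglongrightarrow> 0" by (simp add: c0_def)
  then have "Bseq x" by (intro convergent_imp_Bseq convergentI)
  then obtain K where "\<forall>n. norm (x n) \<le> K" unfolding Bseq_def by auto
  then show ?thesis by (auto intro!: bdd_aboveI[of _ K])
qed

lemma abs_le_c0norm: "x \<in> c0 \<Longrightarrow> \<bar>x k\<bar> \<le> c0norm x"
  unfolding c0norm_def by (rule cSUP_upper[OF _ c0_bdd]) auto

lemma c0norm_nonneg: "x \<in> c0 \<Longrightarrow> 0 \<le> c0norm x"
  using abs_le_c0norm[of x 0] by linarith

lemma c0norm_le: "(\<And>k. \<bar>x k\<bar> \<le> r) \<Longrightarrow> c0norm x \<le> r"
  unfolding c0norm_def by (rule cSUP_least) auto

lemma c0_sum: "(\<And>n. n \<in> S \<Longrightarrow> f n \<in> c0) \<Longrightarrow> (\<lambda>k. \<Sum>n\<in>S. f n k) \<in> c0"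
  unfolding c0_def using tendsto_sum[of S "\<lambda>n k. f n k" "\<lambda>_. 0" sequentially] by auto

lemma c0_scale: "x \<in> c0 \<Longrightarrow> (\<lambda>k. c * x k) \<in> c0"
  unfolding c0_def using tendsto_mult_right_zero by auto

lemma c0_diff: "x \<in> c0 \<Longrightarrow> y \<in> c0 \<Longrightarrow> (\<lambda>k. x k - y k) \<in> c0"
  unfolding c0_def using tendsto_diff[of x 0 sequentially y 0] by auto

lemma pointwise:
  assumes e: "\<And>n. e n \<in> c0" and y: "y \<in> c0" and sc: "series_conv a e y"
  shows "(\<lambda>N. \<Sum>n<N. a n * e n k) \<longlonglongrightarrow> y k"
proof -
  let ?d = "\<lambda>N k. (\<Sum>n<N. a n * e n k) - y k"
  have d: "?d N \<in> c0" for N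
    using c0_diff[OF c0_sum[of "{..<N}" "\<lambda>n k. a n * e n k"] y] c0_scale e by auto
  have "(\<lambda>N. ?d N k) \<longlonglongrightarrow> 0"
  proof (rule Lim_null_comparison)
    show "\<forall>\<^sub>F N in sequentially. norm (?d N k) \<le> c0norm (?d N)"
      using abs_le_c0norm[OF d] by auto
    show "(\<lambda>N. c0norm (?d N)) \<longlonglongrightarrow> 0" using sc unfolding series_conv_def .
  qed
  then show ?thesis by (simp add: LIM_zero_iff)
qed

lemma conv_unique:
  assumes e: "\<And>n. e n \<in> c0" and "y \<in> c0" "z \<in> c0" "series_conv a e y" "series_conv a e z"
  shows "y = z"
proof
  fix k show "y k = z k" using pointwise[OF e assms(2,4), of k] pointwise[OF e assms(3,5), of k]
    LIMSEQ_unique by blast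
qed

lemma series_norm_eq:
  assumes e: "\<And>n. e n \<in> c0" and "y \<in> c0" "series_conv a e y"
  shows "series_norm a e = ereal (c0norm y)"
proof -
  have "(THE y. y \<in> c0 \<and> series_conv a e y) = y"
    using assms conv_unique[OF e] by (intro the_equality) auto
  then show ?thesis using assms unfolding series_norm_def by auto
qed

lemma series_norm_nonneg:
  assumes e: "\<And>n. e n \<in> c0" shows "0 \<le> series_norm a e"
proof (cases "\<exists>y\<in>c0. series_conv a e y")
  case True then obtain y where "y \<in> c0" "series_conv a e y" by auto
  then show ?thesis using series_norm_eq[OF e] c0norm_nonneg by auto
next
  case False then show ?thesis unfolding series_norm_def by auto
qed

lemma signs_one: "(\<lambda>_. 1) \<in> signs" by (simp add: signs_def)

lemma r_unc_nonneg: assumes e: "\<And>n. e n \<in> c0" shows "0 \<le> r_unc e \<epsilon>"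
  unfolding r_unc_def using signs_one series_norm_nonneg[OF e]
  by (meson SUP_upper2)

lemma brick_le_r_unc:
  assumes sb: "schauder_basis e" and x: "x \<in> brick e \<epsilon>"
  shows "ereal (c0norm x) \<le> r_unc e \<epsilon>"
proof (cases "r_unc e \<epsilon> = \<infinity>")
  case True then show ?thesis by simp
next
  case False
  have e: "\<And>n. e n \<in> c0" using sb by (simp add: schauder_basis_def)
  have "r_unc e \<epsilon> \<ge> 0" by (rule r_unc_nonneg[OF e])
  with False obtain r where r: "r_unc e \<epsilon> = ereal r" by (cases "r_unc e \<epsilon>") auto
  have Y: "\<exists>y\<in>c0. series_conv (\<lambda>n. \<theta> n * \<epsilon> n) e y \<and> c0norm y \<le> r" if th: "\<theta> \<in> signs" for \<theta>
  proof -
    have le: "series_norm (\<lambda>n. \<theta> n * \<epsilon> n) e \<le> ereal r"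
      using th r unfolding r_unc_def by (metis SUP_upper)
    then have "\<exists>y\<in>c0. series_conv (\<lambda>n. \<theta> n * \<epsilon> n) e y"
      unfolding series_norm_def by (auto split: if_splits)
    then obtain y where y: "y \<in> c0" "series_conv (\<lambda>n. \<theta> n * \<epsilon> n) e y" by auto
    with le series_norm_eq[OF e y] show ?thesis by auto
  qed
  have xc: "x \<in> c0" and ab: "\<And>n. \<bar>coef e n x\<bar> \<le> \<epsilon> n" using x by (auto simp: brick_def)
  define a where "a = (THE a. series_conv a e x)"
  have sca: "series_conv a e x" unfolding a_def
    using theI'[of "\<lambda>a. series_conv a e x"] sb xc by (auto simp: schauder_basis_def)
  have aa: "\<bar>a n\<bar> \<le> \<epsilon> n" for n using ab[of n] by (simp add: coef_def a_def)
  have "\<bar>x k\<bar> \<le> r" for k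
  proof -
    have bound: "\<bar>\<Sum>n<N. a n * e n k\<bar> \<le> r" for N
    proof -
      define c where "c = (\<Sum>n<N. \<epsilon> n * \<bar>e n k\<bar>)"
      define s where "s n = (if e n k \<ge> 0 then 1 else -1::real)" for n
      define th1 where "th1 n = (if n < N then s n else 1)" for n
      define th2 where "th2 n = (if n < N then s n else -1)" for n
      have "th1 \<in> signs" "th2 \<in> signs" unfolding signs_def th1_def th2_def s_def by auto
      then obtain y1 y2 where y1: "y1 \<in> c0" "series_conv (\<lambda>n. th1 n * \<epsilon> n) e y1" "c0norm y1 \<le> r"
        and y2: "y2 \<in> c0" "series_conv (\<lambda>n. th2 n * \<epsilon> n) e y2" "c0norm y2 \<le> r"
        using Y by meson
      have t: "(\<lambda>M. (\<Sum>n<M. th1 n * \<epsilon> n * e n k) + (\<Sum>n<M. th2 n * \<epsilon> n * e n k)) \<longlonglongrightarrow> y1 k + y2 k"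
        by (intro tendsto_add pointwise[OF e y1(1,2)] pointwise[OF e y2(1,2)])
      have ev: "\<forall>\<^sub>F M in sequentially. 2 * c = (\<Sum>n<M. th1 n * \<epsilon> n * e n k) + (\<Sum>n<M. th2 n * \<epsilon> n * e n k)"
      proof (rule eventually_sequentiallyI[of N])
        fix M assume "N \<le> M"
        have "(\<Sum>n<M. th1 n * \<epsilon> n * e n k) + (\<Sum>n<M. th2 n * \<epsilon> n * e n k)
            = (\<Sum>n<M. if n \<in> {..<N} then 2 * (\<epsilon> n * \<bar>e n k\<bar>) else 0)"
          unfolding sum.distrib[symmetric]
          by (rule sum.cong) (auto simp: th1_def th2_def s_def)
        also have "\<dots> = (\<Sum>n\<in>{..<M} \<inter> {..<N}. 2 * (\<epsilon> n * \<bar>e n k\<bar>))"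
          by (rule sum.inter_restrict[symmetric]) auto
        also have "{..<M} \<inter> {..<N} = {..<N}" using \<open>N \<le> M\<close> by auto
        finally show "2 * c = (\<Sum>n<M. th1 n * \<epsilon> n * e n k) + (\<Sum>n<M. th2 n * \<epsilon> n * e n k)"
          by (simp add: c_def sum_distrib_left)
      qed
      have "(\<lambda>M. (\<Sum>n<M. th1 n * \<epsilon> n * e n k) + (\<Sum>n<M. th2 n * \<epsilon> n * e n k)) \<longlonglongrightarrow> 2 * c"
        by (rule Lim_transform_eventually[OF tendsto_const ev])
      with t have "y1 k + y2 k = 2 * c" using LIMSEQ_unique by blast
      moreover have "\<bar>y1 k\<bar> \<le> r" "\<bar>y2 k\<bar> \<le> r"
        using abs_le_c0norm[OF y1(1)] abs_le_c0norm[OF y2(1)] y1(3) y2(3) by (meson order_trans)+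
      ultimately have "c \<le> r" by linarith
      have "\<bar>\<Sum>n<N. a n * e n k\<bar> \<le> (\<Sum>n<N. \<bar>a n * e n k\<bar>)" by (rule sum_abs)
      also have "\<dots> \<le> c" unfolding c_def
        by (rule sum_mono) (auto simp: abs_mult intro: mult_right_mono aa)
      finally show ?thesis using \<open>c \<le> r\<close> by linarith
    qed
    have "(\<lambda>N. \<bar>\<Sum>n<N. a n * e n k\<bar>) \<longlonglongrightarrow> \<bar>x k\<bar>"
      by (rule tendsto_rabs[OF pointwise[OF e xc sca]])
    then show ?thesis using bound by (intro LIMSEQ_le_const2) auto
  qed
  then have "c0norm x \<le> r" by (rule c0norm_le)
  then show ?thesis using r by simp
qed

definition e0 :: "nat \<Rightarrow> nat \<Rightarrow> real" where "e0 n k = (if k = n then 1 else 0)"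

lemma e0_sum: "(\<Sum>n<N. a n * e0 n k) = (if k < N then a k else 0)"
proof -
  have "(\<Sum>n<N. a n * e0 n k) = (\<Sum>n<N. if k = n then a n else 0)"
    by (rule sum.cong) (auto simp: e0_def)
  also have "\<dots> = (if k < N then a k else 0)" by (simp add: sum.delta)
  finally show ?thesis .
qed

lemma e0_c0: "e0 n \<in> c0"
proof -
  have "(\<lambda>k. 0::real) \<longlonglongrightarrow> 0" by simp
  moreover have "\<forall>\<^sub>F k in sequentially. (0::real) = e0 n k"
    by (rule eventually_sequentiallyI[of "Suc n"]) (auto simp: e0_def)
  ultimately have "e0 n \<longlonglongrightarrow> 0" by (rule Lim_transform_eventually)
  then show ?thesis by (simp add: c0_def)
qed

lemma e0_conv: assumes x: "x \<in> c0" shows "series_conv x e0 x"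
  unfolding series_conv_def
proof (rule tendstoI)
  fix r :: real assume r: "0 < r"
  from x have "x \<longlonglongrightarrow> 0" by (simp add: c0_def)
  then have "\<forall>\<^sub>F k in sequentially. dist (x k) 0 < r/2" using r by (intro tendstoD) auto
  then obtain no where no: "\<And>k. k \<ge> no \<Longrightarrow> \<bar>x k\<bar> < r/2" by (auto simp: eventually_sequentially)
  show "\<forall>\<^sub>F N in sequentially. dist (c0norm (\<lambda>k. (\<Sum>n<N. x n * e0 n k) - x k)) 0 < r"
  proof (rule eventually_sequentiallyI[of no])
    fix N assume N: "no \<le> N"
    have inc: "(\<lambda>k. (\<Sum>n<N. x n * e0 n k) - x k) \<in> c0"
      using c0_diff[OF c0_sum[of "{..<N}" "\<lambda>n k. x n * e0 n k"] x] c0_scale e0_c0 by auto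
    have "c0norm (\<lambda>k. (\<Sum>n<N. x n * e0 n k) - x k) \<le> r/2"
    proof (rule c0norm_le)
      fix k show "\<bar>(\<Sum>n<N. x n * e0 n k) - x k\<bar> \<le> r/2"
        using no[of k] N r unfolding e0_sum by auto
    qed
    then show "dist (c0norm (\<lambda>k. (\<Sum>n<N. x n * e0 n k) - x k)) 0 < r"
      using c0norm_nonneg[OF inc] r by (simp add: dist_real_def)
  qed
qed

lemma e0_unique: assumes x: "x \<in> c0" and sc: "series_conv a e0 x" shows "a = x"
proof
  fix k
  have 1: "(\<lambda>N. if k < N then a k else 0) \<longlonglongrightarrow> x k"
    using pointwise[OF e0_c0 x sc, of k] unfolding e0_sum .
  have "\<forall>\<^sub>F N in sequentially. a k = (if k < N then a k else 0)"
    by (rule eventually_sequentiallyI[of "Suc k"]) auto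
  then have 2: "(\<lambda>N. if k < N then a k else 0) \<longlonglongrightarrow> a k"
    by (rule Lim_transform_eventually[OF tendsto_const])
  show "a k = x k" using 1 2 LIMSEQ_unique by blast
qed

lemma coef_e0: "x \<in> c0 \<Longrightarrow> coef e0 n x = x n"
  unfolding coef_def using e0_conv e0_unique
  by (metis (mono_tags, lifting) the_equality)

lemma c0_sign: assumes x: "x \<in> c0" and th: "\<theta> \<in> signs" shows "(\<lambda>n. \<theta> n * x n) \<in> c0"
proof -
  have ab: "\<bar>\<theta> n * x n\<bar> = \<bar>x n\<bar>" for n proof -
    have "\<theta> n = 1 \<or> \<theta> n = -1" using th unfolding signs_def by blast
    then have "\<bar>\<theta> n\<bar> = 1" by auto
    then show ?thesis by (simp add: abs_mult)
  qed
  have "(\<lambda>n. \<bar>x n\<bar>) \<longlonglongrightarrow> 0" using x tendsto_rabs_zero by (auto simp: c0_def)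
  then have "(\<lambda>n. \<theta> n * x n) \<longlonglongrightarrow> 0"
    by (rule Lim_null_comparison[rotated]) (simp add: ab)
  then show ?thesis by (simp add: c0_def)
qed

lemma c0norm_sign: assumes th: "\<theta> \<in> signs" shows "c0norm (\<lambda>n. \<theta> n * x n) = c0norm x"
proof -
  have ab: "\<bar>\<theta> n * x n\<bar> = \<bar>x n\<bar>" for n proof -
    have "\<theta> n = 1 \<or> \<theta> n = -1" using th unfolding signs_def by blast
    then have "\<bar>\<theta> n\<bar> = 1" by auto
    then show ?thesis by (simp add: abs_mult)
  qed
  show ?thesis unfolding c0norm_def ab ..
qed

lemma e0_schauder: "schauder_basis e0"
proof -
  have "c0norm (e0 n) = 1" for n
  proof (rule antisym)
    show "c0norm (e0 n) \<le> 1" by (rule c0norm_le) (simp add: e0_def)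
    show "1 \<le> c0norm (e0 n)" using abs_le_c0norm[OF e0_c0, of n n] by (simp add: e0_def)
  qed
  then show ?thesis unfolding schauder_basis_def using e0_c0 e0_conv e0_unique by blast
qed

lemma e0_unc: "unconditional_basis e0"
  unfolding unconditional_basis_def
proof (intro conjI e0_schauder ballI)
  fix x \<theta> assume x: "x \<in> c0" and th: "\<theta> \<in> signs"
  have "series_conv (\<lambda>n. \<theta> n * coef e0 n x) e0 (\<lambda>n. \<theta> n * x n)"
    using e0_conv[OF c0_sign[OF x th]] coef_e0[OF x] by simp
  then show "\<exists>y\<in>c0. series_conv (\<lambda>n. \<theta> n * coef e0 n x) e0 y \<and> c0norm y \<le> c0norm x"
    using c0_sign[OF x th] c0norm_sign[OF th] by auto
qed

lemma pc_bound:
  assumes A: "A \<subseteq> c0" and pc: "precompact_c0 A"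
  shows "\<exists>M. \<forall>x\<in>A. \<forall>k. \<bar>x k\<bar> \<le> M"
proof -
  obtain F where F: "finite F" "F \<subseteq> A" "\<forall>x\<in>A. \<exists>y\<in>F. c0norm (\<lambda>k. x k - y k) < 1"
    using pc unfolding precompact_c0_def by (meson zero_less_one)
  define M where "M = (\<Sum>y\<in>F. c0norm y) + 1"
  have "\<bar>x k\<bar> \<le> M" if x: "x \<in> A" for x k
  proof -
    obtain y where y: "y \<in> F" "c0norm (\<lambda>k. x k - y k) < 1" using F x by auto
    have yc: "y \<in> c0" using y F A by auto
    have xc: "x \<in> c0" using x A by auto
    have "\<bar>x k - y k\<bar> \<le> c0norm (\<lambda>k. x k - y k)"
      using abs_le_c0norm[OF c0_diff[OF xc yc]] by simp
    moreover have "\<bar>y k\<bar> \<le> c0norm y" using abs_le_c0norm[OF yc] by simp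
    moreover have "c0norm y \<le> (\<Sum>y\<in>F. c0norm y)"
      using F A y by (intro member_le_sum c0norm_nonneg) auto
    ultimately show ?thesis unfolding M_def using y(2) by linarith
  qed
  thus ?thesis by blast
qed

theorem proposition4p9:
  fixes A :: "(nat \<Rightarrow> real) set"
  assumes "A \<subseteq> c0" and "precompact_c0 A"
  shows "entropy A < \<infinity> \<and> entropy A = entropy0 A \<and>
         entropy0 A = Sup (insert 0 ((\<lambda>x. ereal (c0norm x)) ` A))"
proof -
  note A = assms(1) and pc = assms(2)
  define S where "S = Sup (insert 0 ((\<lambda>x. ereal (c0norm x)) ` A))"
  obtain M where M: "\<And>x k. x \<in> A \<Longrightarrow> \<bar>x k\<bar> \<le> M" using pc_bound[OF A pc] by blast
  define eps where "eps n = Sup (insert 0 ((\<lambda>x. \<bar>x n\<bar>) ` A))" for n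
  have bdd: "bdd_above (insert 0 ((\<lambda>x. \<bar>x n\<bar>) ` A))" for n
    proof (rule bdd_aboveI[of _ "max 0 M"])
    fix z assume "z \<in> insert 0 ((\<lambda>x. \<bar>x n\<bar>) ` A)"
    then show "z \<le> max 0 M"
    proof
      assume "z = 0" then show ?thesis by simp
    next
      assume "z \<in> (\<lambda>x. \<bar>x n\<bar>) ` A"
      then obtain x where "x \<in> A" "z = \<bar>x n\<bar>" by blast
      then have "z \<le> M" using M by blast
      then show ?thesis by linarith
    qed
  qed
  have eps_ge: "\<bar>x n\<bar> \<le> eps n" if "x \<in> A" for x n
    unfolding eps_def using that by (intro cSup_upper[OF _ bdd]) auto
  have eps_nn: "0 \<le> eps n" for n
    unfolding eps_def by (intro cSup_upper[OF _ bdd]) auto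
  have eps_le: "eps n \<le> t" if "0 \<le> t" "\<And>x. x \<in> A \<Longrightarrow> \<bar>x n\<bar> \<le> t" for n t
    unfolding eps_def using that by (intro cSup_least) auto
  have "eps \<longlonglongrightarrow> 0"
  proof (rule tendstoI)
    fix r :: real assume r: "0 < r"
    obtain F where F: "finite F" "F \<subseteq> A" "\<forall>x\<in>A. \<exists>y\<in>F. c0norm (\<lambda>k. x k - y k) < r/4"
    proof -
      have "r/4 > 0" using r by simp
      then show ?thesis using pc that unfolding precompact_c0_def by blast
    qed
    have "\<forall>y\<in>F. \<forall>\<^sub>F n in sequentially. dist (y n) 0 < r/4"
    proof
      fix y assume "y \<in> F"
      then have "y \<in> c0" using F(2) A by blast
      then have "y \<longlonglongrightarrow> 0" by (simp add: c0_def)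
      moreover have "r/4 > 0" using r by simp
      ultimately show "\<forall>\<^sub>F n in sequentially. dist (y n) 0 < r/4" by (rule tendstoD)
    qed
    then have "\<forall>\<^sub>F n in sequentially. \<forall>y\<in>F. dist (y n) 0 < r/4"
      by (subst eventually_ball_finite_distrib[OF F(1)])
    then show "\<forall>\<^sub>F n in sequentially. dist (eps n) 0 < r"
    proof (rule eventually_mono)
      fix n assume H: "\<forall>y\<in>F. dist (y n) 0 < r/4"
      have "eps n \<le> r/2"
      proof (rule eps_le)
        show "0 \<le> r/2" using r by simp
        fix x assume x: "x \<in> A"
        obtain y where y: "y \<in> F" "c0norm (\<lambda>k. x k - y k) < r/4" using F(3) x by blast
        have "x \<in> c0" "y \<in> c0" using x y F(2) A by blast+
        then have "\<bar>x n - y n\<bar> \<le> c0norm (\<lambda>k. x k - y k)"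
          using abs_le_c0norm[OF c0_diff] by blast
        moreover have "\<bar>y n\<bar> < r/4" using H y by (simp add: dist_real_def)
        moreover have "\<bar>x n\<bar> - \<bar>y n\<bar> \<le> \<bar>x n - y n\<bar>" by (rule abs_triangle_ineq2)
        ultimately show "\<bar>x n\<bar> \<le> r/2" using y(2) by argo
      qed
      then show "dist (eps n) 0 < r" using eps_nn[of n] r by (simp add: dist_real_def)
    qed
  qed
  then have epsc: "eps \<in> c0" by (simp add: c0_def)
  have low: "S \<le> entropy A"
    unfolding entropy_def S_def
  proof (rule INF_greatest)
    fix p assume "p \<in> {(e, \<epsilon>). schauder_basis e \<and> (\<forall>n. \<epsilon> n \<ge> 0) \<and> A \<subseteq> brick e \<epsilon>}"
    then obtain e \<epsilon> where p: "p = (e, \<epsilon>)" "schauder_basis e" "A \<subseteq> brick e \<epsilon>" by auto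
    have e: "\<And>n. e n \<in> c0" using p(2) by (simp add: schauder_basis_def)
    show "Sup (insert 0 ((\<lambda>x. ereal (c0norm x)) ` A)) \<le> r_unc (fst p) (snd p)"
      using r_unc_nonneg[OF e] brick_le_r_unc[OF p(2)] p(1,3)
      by (auto intro!: Sup_least)
  qed
  have mid: "entropy A \<le> entropy0 A"
    unfolding entropy_def entropy0_def
    by (rule INF_superset_mono) (auto simp: unconditional_basis_def)
  have up: "entropy0 A \<le> ereal (c0norm eps)"
  proof -
    have "(e0, eps) \<in> {(e, \<epsilon>). unconditional_basis e \<and> (\<forall>n. \<epsilon> n \<ge> 0) \<and> A \<subseteq> brick e \<epsilon>}"
      using e0_unc eps_nn A eps_ge coef_e0 by (auto simp: brick_def)
    then have "entropy0 A \<le> r_unc e0 eps"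
      unfolding entropy0_def by (metis (no_types, lifting) INF_lower fst_conv snd_conv)
    also have "r_unc e0 eps \<le> ereal (c0norm eps)"
      unfolding r_unc_def
    proof (rule SUP_least)
      fix \<theta> assume th: "\<theta> \<in> signs"
      show "series_norm (\<lambda>n. \<theta> n * eps n) e0 \<le> ereal (c0norm eps)"
        using series_norm_eq[OF e0_c0 c0_sign[OF epsc th] e0_conv[OF c0_sign[OF epsc th]]]
          c0norm_sign[OF th] by simp
    qed
    finally show ?thesis .
  qed
  have S0: "0 \<le> S" unfolding S_def by (rule Sup_upper) simp
  have SM: "S \<le> ereal (max 0 M)" unfolding S_def
  proof (rule Sup_least)
    fix z assume "z \<in> insert 0 ((\<lambda>x. ereal (c0norm x)) ` A)"
    then show "z \<le> ereal (max 0 M)"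
    proof
      assume "z = 0"
      moreover have "(0::real) \<le> max 0 M" by simp
      ultimately show ?thesis by (simp only: zero_ereal_def ereal_less_eq)
    next
      assume "z \<in> (\<lambda>x. ereal (c0norm x)) ` A"
      then obtain x where "x \<in> A" "z = ereal (c0norm x)" by auto
      have "\<bar>x k\<bar> \<le> max 0 M" for k using M[OF \<open>x \<in> A\<close>, of k] by linarith
      then have "c0norm x \<le> max 0 M" by (rule c0norm_le)
      then show ?thesis using \<open>z = ereal (c0norm x)\<close> by (simp only: ereal_less_eq)
    qed
  qed
  have "ereal (max 0 M) < \<infinity>" by (simp only: less_ereal.simps)
  with SM have "S < \<infinity>" by (rule le_less_trans)
  with S0 obtain s where s: "S = ereal s" by (cases S) auto
  have "c0norm eps \<le> s"
  proof (rule c0norm_le)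
    fix n show "\<bar>eps n\<bar> \<le> s"
    proof -
      have "eps n \<le> s"
      proof (rule eps_le)
        show "0 \<le> s" using S0 s by simp
        fix x assume x: "x \<in> A"
        have "ereal (c0norm x) \<le> S" unfolding S_def using x by (intro Sup_upper) auto
        then have "c0norm x \<le> s" using s by simp
        moreover have "\<bar>x n\<bar> \<le> c0norm x" using abs_le_c0norm x A by auto
        ultimately show "\<bar>x n\<bar> \<le> s" by linarith
      qed
      then show ?thesis using eps_nn[of n] by simp
    qed
  qed
  then have top: "ereal (c0norm eps) \<le> S" using s by simp
  have "entropy A = S" "entropy0 A = S" using low mid up top by (auto intro: antisym order_trans)
  then show ?thesis using s unfolding S_def by auto
qed

end
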